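(* Let $q\ge 4$ be a prime power and $\mathcal{K}$ a set of $q(q-2)$ points in $\mathrm{PG}(2,q)$. Then there exists a line $L$ with $|L\cap\mathcal{K}|\notin\{0,q-2,q-1\}$.
   Context: $\mathrm{PG}(2,q)$ is the projective plane of $\mathbb{F}_q^3$; points are $1$-dimensional and lines $2$-dimensional subspaces. *)

theory Defs
  imports "HOL-Analysis.Analysis"
begin

text \<open>The projective plane PG(2,q) over a finite field 'a with q = CARD('a) elements.
  Points are 1-dimensional subspaces of 'a^3, lines are 2-dimensional subspaces,
  both represented as sets of vectors.\<close>

definition pg_point :: "('a::field ^ 3) set \<Rightarrow> bool" where
  "pg_point P \<longleftrightarrow> (\<exists>v. v \<noteq> 0 \<and> P = {c *s v | c. True})"

definition pg_line :: "('a::field ^ 3) set \<Rightarrow> bool" where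
  "pg_line L \<longleftrightarrow> (\<exists>u w. (\<forall>a b. a *s u + b *s w = 0 \<longrightarrow> a = 0 \<and> b = 0)
                      \<and> L = {a *s u + b *s w | a b. True})"

definition line_meet_card :: "('a::field ^ 3) set \<Rightarrow> ('a ^ 3) set set \<Rightarrow> nat" where
  "line_meet_card L K = card {P \<in> K. P \<subseteq> L}"

end

theory Submission
  imports Defs
begin

definition span2 :: "'a::field^3 \<Rightarrow> 'a^3 \<Rightarrow> ('a^3) set" where
  "span2 u w = {a *s u + b *s w | a b. True}"
definition indep :: "'a::field^3 \<Rightarrow> 'a^3 \<Rightarrow> bool" where
  "indep u w \<longleftrightarrow> (\<forall>a b. a *s u + b *s w = 0 \<longrightarrow> a = 0 \<and> b = 0)"
definition pt :: "'a::field^3 \<Rightarrow> ('a^3) set" where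
  "pt p = {c *s p | c. True}"

lemma card_univ_vec3: "card (UNIV :: ('a::finite^3) set) = CARD('a)^3"
proof -
  have "bij_betw vec_nth (UNIV :: ('a^3) set) (PiE (UNIV :: 3 set) (\<lambda>_. UNIV :: 'a set))"
    by (intro bij_betwI[of _ _ _ vec_lambda]) (auto simp: vec_eq_iff)
  hence "card (UNIV :: ('a^3) set) = card (PiE (UNIV :: 3 set) (\<lambda>_. UNIV :: 'a set))"
    by (rule bij_betw_same_card)
  also have "\<dots> = CARD('a)^3" by (rule trans[OF card_PiE[OF finite_class.finite_UNIV]]) simp
  finally show ?thesis .
qed

lemma span2_eq: "span2 u w = (\<lambda>(a,b). a *s u + b *s w) ` UNIV"
  unfolding span2_def by auto

lemma indep_inj: assumes "indep u w" "a *s u + b *s w = a' *s u + b' *s (w::'a::field^3)" shows "a = a' \<and> b = b'"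
proof -
    have e: "(a - a') *s u + (b - b') *s w = (a *s u + b *s w) - (a' *s u + b' *s w)"
      by (simp add: vec_eq_iff left_diff_distrib)
    have "(a - a') *s u + (b - b') *s w = 0" unfolding e assms(2) by simp
    hence "a - a' = 0 \<and> b - b' = 0" using assms(1) unfolding indep_def by blast
    thus ?thesis by simp
qed

lemma card_span2:
  fixes u w :: "'a::{finite,field}^3"
  assumes "indep u w" shows "card (span2 u w) = CARD('a)^2"
proof -
  have "inj (\<lambda>(a::'a,b::'a). a *s u + b *s w)"
  proof (rule injI, clarify)
    fix a b a' b' :: 'a assume h: "a *s u + b *s w = a' *s u + b' *s w"
    show "a = a' \<and> b = b'" using indep_inj[OF assms h] .
  qed
  hence "card (span2 u w) = card (UNIV :: ('a \<times> 'a) set)"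
    unfolding span2_eq by (simp add: card_image)
  thus ?thesis by (simp add: card_UNIV power2_eq_square)
qed

lemma card_pt:
  fixes p :: "'a::{finite,field}^3"
  assumes "p \<noteq> 0" shows "card (pt p) = CARD('a)"
proof -
  have "pt p = (\<lambda>c. c *s p) ` UNIV" unfolding pt_def by auto
  moreover have "inj (\<lambda>c. c *s p)"
  proof (rule injI)
    fix c c' :: 'a assume "c *s p = c' *s p"
    hence "(c - c') *s p = 0" by (simp add: vec_eq_iff left_diff_distrib)
    moreover obtain i where "p $ i \<noteq> 0" using assms by (auto simp: vec_eq_iff)
    ultimately show "c = c'" by (auto simp: vec_eq_iff)
  qed
  ultimately show ?thesis by (simp add: card_image)
qed

lemma span2_closed:
  assumes "x \<in> span2 u w" "y \<in> span2 u w"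
  shows "a *s x + b *s y \<in> span2 u w"
proof -
  obtain a1 b1 a2 b2 where "x = a1 *s u + b1 *s w" "y = a2 *s u + b2 *s w"
    using assms unfolding span2_def by auto
  hence "a *s x + b *s y = (a*a1 + b*a2) *s u + (a*b1+b*b2) *s w"
    by (simp add: vec_eq_iff distrib_left distrib_right mult.assoc)
  thus ?thesis unfolding span2_def by blast
qed

lemma span2_sub:
  assumes "p \<in> span2 u w" "x \<in> span2 u w" shows "span2 p x \<subseteq> span2 u w"
  using span2_closed[OF assms] unfolding span2_def by auto

lemma span2_eqI:
  fixes u w :: "'a::{finite,field}^3"
  assumes "indep u w" "indep p x" "p \<in> span2 u w" "x \<in> span2 u w"
  shows "span2 p x = span2 u w"
  by (rule card_subset_eq) (auto simp: card_span2 assms span2_sub)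

lemma indepI:
  assumes "p \<noteq> 0" "x \<notin> pt p" shows "indep p x"
  unfolding indep_def
proof (intro allI impI)
  fix a b assume h: "a *s p + b *s x = 0"
  show "a = 0 \<and> b = 0"
  proof (cases "b = 0")
    case True
    with h have "a *s p = 0" by simp
    moreover obtain i where "p $ i \<noteq> 0" using assms by (auto simp: vec_eq_iff)
    ultimately show ?thesis using True by (auto simp: vec_eq_iff)
  next
    case False
    have "\<forall>i. a * p$i + b * x$i = 0" using h by (simp add: vec_eq_iff)
    hence "x = (- a / b) *s p" using False by (simp add: vec_eq_iff field_simps add_eq_0_iff2)
    hence "x \<in> pt p" unfolding pt_def by blast
    with assms show ?thesis by simp
  qed
qed

lemma pg_point_pt: "pg_point P \<Longrightarrow> \<exists>p. p \<noteq> 0 \<and> P = pt p"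
  unfolding pg_point_def pt_def by auto

lemma pt_other:
  fixes p :: "'a::field^3"
  assumes "x \<in> pt p" "x \<noteq> 0" shows "pt x = pt p"
proof -
  obtain c where c: "x = c *s p" using assms unfolding pt_def by auto
  with assms have "c \<noteq> 0" by auto
  show ?thesis unfolding pt_def
  proof (auto)
    fix d show "\<exists>e. d *s x = e *s p" using c by (auto simp: vec_eq_iff)
  next
    fix d show "\<exists>e. d *s p = e *s x" using c \<open>c \<noteq> 0\<close>
      by (intro exI[of _ "d / c"]) (auto simp: vec_eq_iff)
  qed
qed

lemma zero_pt: "0 \<in> pt p" unfolding pt_def by (auto intro: exI[of _ 0])
lemma self_pt: "p \<in> pt p" unfolding pt_def by (auto intro: exI[of _ 1])

lemma pg_line_span2: "pg_line L \<longleftrightarrow> (\<exists>u w. indep u w \<and> L = span2 u w)"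
  unfolding pg_line_def indep_def span2_def by auto

lemma p_in_span2: "p \<in> span2 p x" "x \<in> span2 p x"
proof -
  have "p = 1 *s p + 0 *s x" "x = 0 *s p + 1 *s x" by (simp_all add: vec_eq_iff)
  thus "p \<in> span2 p x" "x \<in> span2 p x" unfolding span2_def by blast+
qed

lemma pt_sub_line: "pg_line L \<Longrightarrow> p \<in> L \<Longrightarrow> pt p \<subseteq> L"
proof -
  assume "pg_line L" "p \<in> L"
  then obtain u w where L: "L = span2 u w" unfolding pg_line_span2 by auto
  show "pt p \<subseteq> L"
  proof
    fix y assume "y \<in> pt p"
    then obtain c where "y = c *s p + 0 *s p" unfolding pt_def by auto
    thus "y \<in> L" using span2_closed[of p u w p c 0] \<open>p \<in> L\<close> L by simp
  qed
qed

lemma line_unique: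
  fixes p :: "'a::{finite,field}^3"
  assumes "pg_line L1" "pg_line L2" "p \<noteq> 0" "pt p \<subseteq> L1" "pt p \<subseteq> L2"
    "x \<in> L1" "x \<in> L2" "x \<notin> pt p"
  shows "L1 = L2"
proof -
  have ind: "indep p x" using assms indepI by blast
  have "p \<in> L1" "p \<in> L2" using assms self_pt by blast+
  obtain u1 w1 where 1: "indep u1 w1" "L1 = span2 u1 w1" using assms(1) pg_line_span2 by blast
  obtain u2 w2 where 2: "indep u2 w2" "L2 = span2 u2 w2" using assms(2) pg_line_span2 by blast
  have "L1 = span2 p x" using span2_eqI[OF 1(1) ind] 1(2) \<open>p \<in> L1\<close> assms(6) by simp
  moreover have "L2 = span2 p x" using span2_eqI[OF 2(1) ind] 2(2) \<open>p \<in> L2\<close> assms(7) by simp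
  ultimately show ?thesis by simp
qed

lemma line_exists:
  fixes p :: "'a::{finite,field}^3"
  assumes "p \<noteq> 0" "x \<notin> pt p"
  shows "pg_line (span2 p x) \<and> pt p \<subseteq> span2 p x \<and> x \<in> span2 p x"
proof -
  have "pg_line (span2 p x)" using indepI[OF assms] pg_line_span2 by blast
  thus ?thesis using pt_sub_line p_in_span2 by blast
qed

lemma card_line:
  fixes L :: "('a::{finite,field}^3) set"
  assumes "pg_line L" shows "card L = CARD('a)^2"
  using assms card_span2 pg_line_span2 by metis

lemma arith1:
  fixes q r :: nat
  assumes "q \<ge> 2" "q^3 - q = r * (q^2 - q)"
  shows "r = q + 1"
proof -
  have "q^3 - q = (q+1) * (q^2 - q)"
    by (simp add: algebra_simps power3_eq_cube power2_eq_square diff_mult_distrib2 diff_mult_distrib)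
  moreover have "q^2 - q > 0" using assms(1) by (simp add: power2_eq_square)
  ultimately have h: "(q+1) * (q^2 - q) = r * (q^2 - q)" "q^2 - q \<noteq> 0" using assms(2) by auto
  from h(1) show ?thesis unfolding mult_right_cancel[OF h(2)] by simp
qed

lemma lines_through_card:
  fixes p :: "'a::{finite,field}^3"
  assumes "p \<noteq> 0" "CARD('a) \<ge> 2"
  shows "card {L. pg_line L \<and> pt p \<subseteq> L} = CARD('a) + 1"
proof -
  define LP where "LP = {L. pg_line L \<and> pt p \<subseteq> L}"
  have cov: "UNIV - pt p = \<Union> ((\<lambda>L. L - pt p) ` LP)"
  proof
    show "UNIV - pt p \<subseteq> \<Union> ((\<lambda>L. L - pt p) ` LP)"
    proof
      fix x assume "x \<in> UNIV - pt p"
      hence "x \<notin> pt p" by simp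
      with line_exists[OF assms(1) this] show "x \<in> \<Union> ((\<lambda>L. L - pt p) ` LP)"
        unfolding LP_def by blast
    qed
  qed auto
  have "card (UNIV - pt p) = (\<Sum>L\<in>LP. card (L - pt p))"
    unfolding cov
  proof (rule card_UN_disjoint)
    show "finite LP" by simp
    show "\<forall>i\<in>LP. finite (i - pt p)" by simp
    show "\<forall>i\<in>LP. \<forall>j\<in>LP. i \<noteq> j \<longrightarrow> (i - pt p) \<inter> (j - pt p) = {}"
    proof (intro ballI impI)
      fix i j assume "i \<in> LP" "j \<in> LP" "i \<noteq> j"
      show "(i - pt p) \<inter> (j - pt p) = {}"
      proof (rule ccontr)
        assume "(i - pt p) \<inter> (j - pt p) \<noteq> {}"
        then obtain x where "x \<in> i" "x \<in> j" "x \<notin> pt p" by blast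
        hence "i = j" using line_unique[OF _ _ assms(1)] \<open>i \<in> LP\<close> \<open>j \<in> LP\<close> unfolding LP_def by blast
        with \<open>i \<noteq> j\<close> show False by simp
      qed
    qed
  qed
  also have "\<dots> = (\<Sum>L\<in>LP. CARD('a)^2 - CARD('a))"
    by (rule sum.cong) (auto simp: LP_def card_Diff_subset card_line card_pt assms)
  also have "\<dots> = card LP * (CARD('a)^2 - CARD('a))" by simp
  finally have "CARD('a)^3 - CARD('a) = card LP * (CARD('a)^2 - CARD('a))"
    by (simp add: card_Diff_subset card_univ_vec3 card_pt assms)
  from arith1[OF assms(2) this] show ?thesis unfolding LP_def .
qed


lemma arith2:
  fixes q y :: nat
  assumes "q \<ge> 4" "q * (q - 2) - 1 = (q+1)*(q-3) + y"
  shows "y = 2"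
proof -
  obtain k where k: "q = k + 4" using assms(1) by (metis add.commute le_Suc_ex)
  have "q * (q - 2) = (k+4)*(k+2)" using k by simp
  moreover have "(q+1)*(q-3) = (k+5)*(k+1)" using k by simp
  ultimately have "(k+4)*(k+2) - 1 = (k+5)*(k+1) + y" using assms(2) by simp
  thus ?thesis by (simp add: algebra_simps)
qed

lemma arith3:
  fixes q b :: nat
  assumes "q \<ge> 4" "b * (q - 1) = 2 * (q * (q - 2))"
  shows False
proof -
  obtain k where k: "q = k + 4" using assms(1) by (metis add.commute le_Suc_ex)
  have e1: "q - 1 = k + 3" "q * (q - 2) = (k+4)*(k+2)" using k by simp_all
  have e: "b * (k+3) = 2 * ((k+4)*(k+2))" using assms(2) unfolding e1 .
  show False
  proof (cases "b \<le> 2*k+5")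
    case True
    hence "b * (k+3) \<le> (2*k+5)*(k+3)" by (rule mult_right_mono) simp
    with e show False by (simp add: algebra_simps)
  next
    case False
    hence "(2*k+6)*(k+3) \<le> b * (k+3)" by (intro mult_right_mono) simp_all
    with e show False by (simp add: algebra_simps)
  qed
qed

lemma point_count:
  fixes K :: "('a::{finite,field} ^ 3) set set" and P :: "('a^3) set"
  assumes q4: "CARD('a) \<ge> 4"
    and pts: "\<forall>P\<in>K. pg_point P"
    and cK: "card K = CARD('a) * (CARD('a) - 2)"
    and H: "\<forall>L. pg_line L \<longrightarrow> line_meet_card L K \<in> {0, CARD('a) - 2, CARD('a) - 1}"
    and PK: "P \<in> K"
  shows "card {L. pg_line L \<and> P \<subseteq> L \<and> line_meet_card L K = CARD('a) - 1} = 2"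
proof -
  define q where "q = CARD('a)"
  obtain p where p: "p \<noteq> 0" "P = pt p" using pts PK pg_point_pt by blast
  define LP where "LP = {L. pg_line L \<and> P \<subseteq> L}"
  define F where "F = (\<lambda>L. {Q\<in>K. Q \<subseteq> L \<and> Q \<noteq> P})"
  have finK: "finite K" by simp
  have cLP: "card LP = q + 1" unfolding LP_def q_def p(2) using lines_through_card[OF p(1)] q4 by simp
  have cov: "K - {P} = \<Union> (F ` LP)"
  proof
    show "K - {P} \<subseteq> \<Union> (F ` LP)"
    proof
      fix Q assume Q: "Q \<in> K - {P}"
      have "pg_point Q" using pts Q by blast
      then obtain x where x: "x \<noteq> 0" "Q = pt x" using pg_point_pt by blast
      have "x \<notin> pt p"
      proof
        assume "x \<in> pt p"
        hence "pt x = pt p" using pt_other x(1) by blast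
        thus False using Q x p by simp
      qed
      from line_exists[OF p(1) this] have "pg_line (span2 p x)" "P \<subseteq> span2 p x" "Q \<subseteq> span2 p x"
        using p x pt_sub_line by auto
      thus "Q \<in> \<Union> (F ` LP)" using Q unfolding LP_def F_def by blast
    qed
  qed (auto simp: F_def LP_def)
  have "card (K - {P}) = (\<Sum>L\<in>LP. card (F L))"
    unfolding cov
  proof (rule card_UN_disjoint)
    show "finite LP" by simp
    show "\<forall>i\<in>LP. finite (F i)" by simp
    show "\<forall>i\<in>LP. \<forall>j\<in>LP. i \<noteq> j \<longrightarrow> F i \<inter> F j = {}"
    proof (intro ballI impI)
      fix i j assume ij: "i \<in> LP" "j \<in> LP" "i \<noteq> j"
      show "F i \<inter> F j = {}"
      proof (rule ccontr)
        assume "F i \<inter> F j \<noteq> {}"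
        then obtain Q where "Q \<in> F i" "Q \<in> F j" by blast
        hence Q: "Q \<in> K" "Q \<subseteq> i" "Q \<subseteq> j" "Q \<noteq> P" unfolding F_def by simp_all
        have "pg_point Q" using pts Q(1) by blast
        then obtain x where x: "x \<noteq> 0" "Q = pt x" using pg_point_pt by blast
        have "x \<notin> pt p"
        proof
          assume "x \<in> pt p"
          hence "pt x = pt p" using pt_other x(1) by blast
          thus False using Q x p by simp
        qed
        moreover have "x \<in> i" "x \<in> j" using Q x self_pt by blast+
        ultimately have "i = j" using line_unique[OF _ _ p(1)] ij p(2) unfolding LP_def by blast
        with ij show False by simp
      qed
    qed
  qed
  also have "\<dots> = (\<Sum>L\<in>LP. (q - 3) + (if line_meet_card L K = q - 1 then 1 else 0))"
  proof (rule sum.cong)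
    fix L assume L: "L \<in> LP"
    have "F L = {Q\<in>K. Q \<subseteq> L} - {P}" unfolding F_def by auto
    moreover have "P \<in> {Q\<in>K. Q \<subseteq> L}" using L PK unfolding LP_def by simp
    ultimately have cF: "card (F L) = line_meet_card L K - 1" unfolding line_meet_card_def by simp
    have "line_meet_card L K \<ge> 1" unfolding line_meet_card_def
      using \<open>P \<in> {Q\<in>K. Q \<subseteq> L}\<close> by (metis (no_types, lifting) card_0_eq empty_iff finite_class.finite_code less_one linorder_not_le)
    moreover have "line_meet_card L K \<in> {0, q - 2, q - 1}" using H L unfolding LP_def q_def by blast
    ultimately show "card (F L) = (q - 3) + (if line_meet_card L K = q - 1 then 1 else 0)"
      using cF q4 unfolding q_def by auto
  qed simp
  also have "\<dots> = (q+1)*(q-3) + (\<Sum>L\<in>LP. if line_meet_card L K = q - 1 then 1 else 0)"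
    by (simp add: sum.distrib cLP)
  also have "(\<Sum>L\<in>LP. if line_meet_card L K = q - 1 then 1 else 0) = card {L\<in>LP. line_meet_card L K = q - 1}"
    by (simp add: sum.inter_filter[symmetric])
  finally have "q * (q - 2) - 1 = (q+1)*(q-3) + card {L\<in>LP. line_meet_card L K = q - 1}"
    using cK PK unfolding q_def by simp
  from arith2[OF _ this] q4 have "card {L\<in>LP. line_meet_card L K = q - 1} = 2" unfolding q_def by simp
  moreover have "{L\<in>LP. line_meet_card L K = q - 1} = {L. pg_line L \<and> P \<subseteq> L \<and> line_meet_card L K = CARD('a) - 1}"
    unfolding LP_def q_def by auto
  ultimately show ?thesis by simp
qed

theorem mainTheorem15:
  fixes K :: "('a::{finite,field} ^ 3) set set"
  assumes "CARD('a) \<ge> 4"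
    and "\<forall>P\<in>K. pg_point P"
    and "card K = CARD('a) * (CARD('a) - 2)"
  shows "\<exists>L. pg_line L \<and>
           line_meet_card L K \<notin> {0, CARD('a) - 2, CARD('a) - 1}"
proof (rule ccontr)
  assume "\<not> ?thesis"
  hence H: "\<forall>L. pg_line L \<longrightarrow> line_meet_card L K \<in> {0, CARD('a) - 2, CARD('a) - 1}" by blast
  define q where "q = CARD('a)"
  define B where "B = {L. pg_line L \<and> line_meet_card L K = q - 1}"
  have finK: "finite K" by simp
  have finB: "finite B" by simp
  have "(\<Sum>P\<in>K. card {L\<in>B. P \<subseteq> L}) = (\<Sum>P\<in>K. 2)"
  proof (rule sum.cong)
    fix P assume "P \<in> K"
    have "{L\<in>B. P \<subseteq> L} = {L. pg_line L \<and> P \<subseteq> L \<and> line_meet_card L K = CARD('a) - 1}"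
      unfolding B_def q_def by auto
    thus "card {L\<in>B. P \<subseteq> L} = 2" using point_count[OF assms H \<open>P \<in> K\<close>] by simp
  qed simp
  hence "2 * card K = (\<Sum>P\<in>K. card {L\<in>B. P \<subseteq> L})" by simp
  also have "\<dots> = (\<Sum>P\<in>K. \<Sum>L\<in>B. if P \<subseteq> L then 1 else 0)"
    by (simp add: sum.inter_filter[symmetric] finB)
  also have "\<dots> = (\<Sum>L\<in>B. \<Sum>P\<in>K. if P \<subseteq> L then 1 else 0)"
    by (rule sum.swap)
  also have "\<dots> = (\<Sum>L\<in>B. line_meet_card L K)"
    by (simp add: sum.inter_filter[symmetric] finK line_meet_card_def)
  also have "\<dots> = (\<Sum>L\<in>B. q - 1)"
    by (rule sum.cong) (simp_all add: B_def)
  also have "\<dots> = card B * (q - 1)" by simp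
  finally have "card B * (q - 1) = 2 * (q * (q - 2))" using assms(3) unfolding q_def by simp
  thus False using arith3 assms(1) unfolding q_def by blast
qed

end
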